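(* Let $\sigma\in\mathfrak S_k$ and $\tau\in\mathfrak S_{l}$ be consecutive patterns ($k,l\ge1$) with $A_\sigma(z)=A_\tau(z)$. Then $A_{12\text{-}\sigma}(z)=A_{12\text{-}\tau}(z)$, where for a consecutive pattern $\sigma=\sigma_1\cdots\sigma_k$, $12\text{-}\sigma$ denotes the generalized pattern $12\text{-}(\sigma_1+2)(\sigma_2+2)\cdots(\sigma_k+2)$.
   Context: $\mathfrak S_n$ is the symmetric group on $\{1,\dots,n\}$, permutations in one-line notation. A generalized pattern of length $m$ is a permutation $\sigma_1\cdots\sigma_m\in\mathfrak S_m$ with, between each pair of adjacent entries, either a dash "-" or nothing. A permutation $\pi\in\mathfrak S_n$ contains it if there are indices $i_1<\dots<i_m$ with $i_{j+1}=i_j+1$ whenever there is no dash between $\sigma_j$ and $\sigma_{j+1}$, and with $\pi_{i_a}<\pi_{i_b}$ iff $\sigma_a<\sigma_b$ for all $a,b$; otherwise $\pi$ avoids it. A consecutive pattern has no dashes. $\alpha_n(\sigma)$ is the number of permutations in $\mathfrak S_n$ avoiding $\sigma$ ($\alpha_0=1$) and $A_\sigma(z)=\sum_{n\ge0}\alpha_n(\sigma)z^n/n!$. *)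

theory Defs
  imports "HOL-Computational_Algebra.Formal_Power_Series"
begin

definition perms :: "nat \<Rightarrow> nat list set" where
  "perms n = {p. distinct p \<and> set p = {1..n}}"

text \<open>A generalized pattern is a pair (sigma, D): sigma is a permutation in one-line
notation (a list), and a 0-based position j is in D iff there is a dash between
sigma!j and sigma!(j+1).\<close>
type_synonym gpattern = "nat list \<times> nat set"

definition contains :: "nat list \<Rightarrow> gpattern \<Rightarrow> bool" where
  "contains \<pi> P = (let \<sigma> = fst P; D = snd P; m = length \<sigma> in
     \<exists>ix :: nat \<Rightarrow> nat.
       (\<forall>j<m. ix j < length \<pi>) \<and>
       (\<forall>j. j + 1 < m \<longrightarrow> ix j < ix (j + 1)) \<and>
       (\<forall>j. j + 1 < m \<and> j \<notin> D \<longrightarrow> ix (j + 1) = ix j + 1) \<and>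
       (\<forall>a<m. \<forall>b<m. (\<pi> ! (ix a) < \<pi> ! (ix b)) \<longleftrightarrow> (\<sigma> ! a < \<sigma> ! b)))"

definition avoids :: "nat list \<Rightarrow> gpattern \<Rightarrow> bool" where
  "avoids \<pi> P = (\<not> contains \<pi> P)"

definition alpha :: "nat \<Rightarrow> gpattern \<Rightarrow> nat" where
  "alpha n P = card {\<pi> \<in> perms n. avoids \<pi> P}"

definition egf :: "gpattern \<Rightarrow> real fps" where
  "egf P = Abs_fps (\<lambda>n. of_nat (alpha n P) / fact n)"

definition consec :: "nat list \<Rightarrow> gpattern" where
  "consec \<sigma> = (\<sigma>, {})"

text \<open>12-sigma: the generalized pattern 12-(sigma_1+2)...(sigma_k+2), dash only
between the entry 2 (position 1) and sigma_1+2 (position 2).\<close>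
definition twelve_dash :: "nat list \<Rightarrow> gpattern" where
  "twelve_dash \<sigma> = ([1, 2] @ map (\<lambda>x. x + 2) \<sigma>, {1})"

end

theory Submission
  imports Defs
begin

definition istop :: "nat list \<Rightarrow> nat \<Rightarrow> bool" where
  "istop \<pi> q \<longleftrightarrow> 0 < q \<and> q < length \<pi> \<and> \<pi>!(q-1) < \<pi>!q"

definition fr :: "nat list \<Rightarrow> nat \<Rightarrow> bool" where
  "fr \<pi> j \<longleftrightarrow> j < length \<pi> \<and> (\<exists>q<j. istop \<pi> q \<and> \<pi>!q < \<pi>!j)"

definition occ :: "nat list \<Rightarrow> nat \<Rightarrow> nat list \<Rightarrow> bool" where
  "occ r p \<rho> \<longleftrightarrow> p + length \<rho> \<le> length r \<and>
     (\<forall>a<length \<rho>. \<forall>b<length \<rho>. (r!(p+a) < r!(p+b)) = (\<rho>!a < \<rho>!b))"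

definition bad :: "nat list \<Rightarrow> nat \<Rightarrow> nat list \<Rightarrow> bool" where
  "bad \<pi> p \<rho> \<longleftrightarrow> occ \<pi> p \<rho> \<and> (\<forall>j. p \<le> j \<and> j < p + length \<rho> \<longrightarrow> fr \<pi> j)"

lemma contains_consec:
  assumes "length \<rho> \<ge> 1"
  shows "contains \<pi> (consec \<rho>) \<longleftrightarrow> (\<exists>p. occ \<pi> p \<rho>)"
proof
  assume "contains \<pi> (consec \<rho>)"
  then obtain ix where b: "\<forall>j<length \<rho>. ix j < length \<pi>"
    and c: "\<forall>j. j + 1 < length \<rho> \<longrightarrow> ix (j + 1) = ix j + 1"
    and o: "\<forall>a<length \<rho>. \<forall>b<length \<rho>. (\<pi> ! (ix a) < \<pi> ! (ix b)) = (\<rho> ! a < \<rho> ! b)"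
    unfolding contains_def consec_def Let_def by auto
  have ix: "ix j = ix 0 + j" if "j < length \<rho>" for j
    using that by (induction j) (use c in auto)
  have "ix 0 + (length \<rho> - 1) < length \<pi>"
    using b[rule_format, of "length \<rho> - 1"] ix[of "length \<rho> - 1"] assms by auto
  then have "ix 0 + length \<rho> \<le> length \<pi>" using assms by linarith
  moreover have "\<forall>a<length \<rho>. \<forall>b<length \<rho>. (\<pi>!(ix 0+a) < \<pi>!(ix 0+b)) = (\<rho>!a < \<rho>!b)"
    using o ix by metis
  ultimately show "\<exists>p. occ \<pi> p \<rho>" unfolding occ_def by blast
next
  assume "\<exists>p. occ \<pi> p \<rho>"
  then obtain p where "occ \<pi> p \<rho>" by blast
  then show "contains \<pi> (consec \<rho>)"
    unfolding contains_def consec_def Let_def occ_def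
    by (intro exI[of _ "\<lambda>j. p + j"]) auto
qed

lemma pat_nth0: "([1,2] @ map (\<lambda>x. x+2) \<rho>) ! 0 = (1::nat)" by simp
lemma pat_nth1: "([1,2] @ map (\<lambda>x. x+2) \<rho>) ! 1 = (2::nat)" by simp
lemma pat_nthS: "i < length \<rho> \<Longrightarrow> ([1,2] @ map (\<lambda>x. x+2) \<rho>) ! (i+2) = \<rho>!i + (2::nat)"
  by (simp add: nth_append)

lemma contains_twelve:
  assumes "length \<rho> \<ge> 1" and pos: "\<forall>x\<in>set \<rho>. 1 \<le> x"
  shows "contains \<pi> (twelve_dash \<rho>) \<longleftrightarrow> (\<exists>p. bad \<pi> p \<rho>)"
proof
  let ?P = "[1,2] @ map (\<lambda>x. x+2) \<rho> :: nat list"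
  let ?k = "length \<rho>"
  assume "contains \<pi> (twelve_dash \<rho>)"
  then obtain ix where b: "\<forall>j<?k+2. ix j < length \<pi>"
    and m: "\<forall>j. j + 1 < ?k+2 \<longrightarrow> ix j < ix (j + 1)"
    and c: "\<forall>j. j + 1 < ?k+2 \<and> j \<noteq> 1 \<longrightarrow> ix (j + 1) = ix j + 1"
    and o: "\<forall>a<?k+2. \<forall>b<?k+2. (\<pi> ! (ix a) < \<pi> ! (ix b)) = (?P ! a < ?P ! b)"
    unfolding contains_def twelve_dash_def Let_def by auto
  have ix: "ix (j+2) = ix 2 + j" if "j < ?k" for j
    using that proof (induction j)
    case (Suc j)
    then show ?case using c[rule_format, of "j+2"] by auto
  qed (simp add: numeral_2_eq_2)
  have ix1: "ix 1 = ix 0 + 1" using c[rule_format, of 0] assms by auto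
  have q12: "ix 1 < ix 2" using m[rule_format, of 1] assms(1) by (simp add: numeral_2_eq_2 Suc_le_eq)
  define p where "p = ix 2"
  define q where "q = ix 1"
  have e1: "?k - 1 + 2 = ?k + 1" using assms by simp
  have "ix (?k+1) < length \<pi>" using b by simp
  then have "p + (?k-1) < length \<pi>" using ix[of "?k-1"] assms e1 unfolding p_def by simp
  then have len: "p + ?k \<le> length \<pi>" using assms by linarith
  show "\<exists>p. bad \<pi> p \<rho>"
  proof (intro exI[of _ p])
    have "occ \<pi> p \<rho>" unfolding occ_def
    proof (intro conjI len allI impI)
      fix a b assume ab: "a < ?k" "b < ?k"
      have "(\<pi> ! (ix (a+2)) < \<pi> ! (ix (b+2))) = (?P ! (a+2) < ?P ! (b+2))"
        using o ab by auto
      then show "(\<pi>!(p+a) < \<pi>!(p+b)) = (\<rho>!a < \<rho>!b)"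
        using ab ix[of a] ix[of b] pat_nthS[of a \<rho>] pat_nthS[of b \<rho>] unfolding p_def by simp
    qed
    moreover have "fr \<pi> j" if "p \<le> j" "j < p + ?k" for j
    proof -
      have tq: "istop \<pi> q"
        using o[rule_format, of 0 1] b[rule_format, of 1] ix1 unfolding istop_def q_def by auto
      have "\<rho>!(j-p) \<in> set \<rho>" using that by (intro nth_mem) auto
      then have "1 \<le> \<rho>!(j-p)" using pos by blast
      then have "\<pi>!q < \<pi>!(ix ((j-p)+2))"
        using o[rule_format, of 1 "(j-p)+2"] pat_nthS[of "j-p" \<rho>] that pos
        unfolding q_def by auto
      then have "\<pi>!q < \<pi>!j" using ix[of "j-p"] that unfolding p_def by auto
      moreover have "j < length \<pi>" using len that by auto
      moreover have "q < j" using q12 that unfolding p_def q_def by auto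
      ultimately show ?thesis unfolding fr_def using tq by auto
    qed
    ultimately show "bad \<pi> p \<rho>" unfolding bad_def by auto
  qed
next
  let ?P = "[1,2] @ map (\<lambda>x. x+2) \<rho> :: nat list"
  let ?k = "length \<rho>"
  assume "\<exists>p. bad \<pi> p \<rho>"
  then obtain p where bp: "bad \<pi> p \<rho>" by blast
  have oc: "occ \<pi> p \<rho>" and fj: "\<And>j. p \<le> j \<Longrightarrow> j < p + ?k \<Longrightarrow> fr \<pi> j"
    using bp unfolding bad_def by auto
  have len: "p + ?k \<le> length \<pi>" using oc unfolding occ_def by auto
  have ord: "\<And>a b. a < ?k \<Longrightarrow> b < ?k \<Longrightarrow> (\<pi>!(p+a) < \<pi>!(p+b)) = (\<rho>!a < \<rho>!b)"
    using oc unfolding occ_def by auto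
  define mv where "mv = Min ((\<lambda>j. \<pi>!j) ` {p..<p+?k})"
  have "mv \<in> (\<lambda>j. \<pi>!j) ` {p..<p+?k}" unfolding mv_def using assms by (intro Min_in) auto
  then obtain j0 where j0: "p \<le> j0" "j0 < p + ?k" "\<pi>!j0 = mv" by auto
  have mvle: "mv \<le> \<pi>!j" if "p \<le> j" "j < p + ?k" for j
    unfolding mv_def using that by (intro Min_le) auto
  obtain q where q: "q < j0" "istop \<pi> q" "\<pi>!q < \<pi>!j0" using fj[OF j0(1,2)] unfolding fr_def by auto
  have qp: "q < p"
  proof (rule ccontr)
    assume "\<not> q < p"
    then have "mv \<le> \<pi>!q" using mvle[of q] q j0 by auto
    then show False using q j0 by auto
  qed
  have q0: "0 < q" "q < length \<pi>" "\<pi>!(q-1) < \<pi>!q" using q unfolding istop_def by auto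
  have qlt: "\<pi>!q < \<pi>!(p+i)" if "i < ?k" for i
    using q(3) j0 mvle[of "p+i"] that by auto
  define ix where "ix = (\<lambda>j::nat. if j = 0 then q - 1 else if j = 1 then q else p + (j - 2))"
  show "contains \<pi> (twelve_dash \<rho>)"
    unfolding contains_def twelve_dash_def Let_def fst_conv snd_conv
  proof (intro exI[of _ ix] conjI allI impI)
    fix j assume "j < length ?P"
    then show "ix j < length \<pi>" using q0 qp len unfolding ix_def by auto
  next
    fix j assume "j + 1 < length ?P"
    then show "ix j < ix (j+1)" using q0 qp unfolding ix_def by auto
  next
    fix j assume "j + 1 < length ?P \<and> j \<notin> {1}"
    then show "ix (j+1) = ix j + 1" using q0 unfolding ix_def by auto
  next
    fix a b assume ab: "a < length ?P" "b < length ?P"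
    have cs: "x = 0 \<or> x = 1 \<or> (\<exists>i<?k. x = i + 2)" if "x < length ?P" for x
    proof (cases "x < 2")
      case True then show ?thesis by arith
    next
      case False then show ?thesis using that by (intro disjI2 exI[of _ "x-2"]) auto
    qed
    have pv: "\<And>i. i < ?k \<Longrightarrow> 2 < ?P ! (i+2)" using pat_nthS pos nth_mem by fastforce
    have ixS: "\<And>i. ix (i+2) = p + i" unfolding ix_def by auto
    show "(\<pi> ! ix a < \<pi> ! ix b) = (?P ! a < ?P ! b)"
      using cs[OF ab(1)] cs[OF ab(2)]
    proof (elim disjE exE conjE)
      fix i i' assume "i < ?k" "a = i + 2" "i' < ?k" "b = i' + 2"
      then show ?thesis using ord ixS pat_nthS by simp
    next
      fix i' assume "a = 0" "i' < ?k" "b = i' + 2"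
      then show ?thesis using q0 qlt[of i'] pv[of i'] ixS[of i'] unfolding ix_def by simp
    next
      fix i' assume "a = 1" "i' < ?k" "b = i' + 2"
      then show ?thesis using q0 qlt[of i'] pv[of i'] ixS[of i'] unfolding ix_def by simp
    next
      fix i assume "b = 0" "i < ?k" "a = i + 2"
      then show ?thesis using q0 qlt[of i] pv[of i] ixS[of i] unfolding ix_def by simp
    next
      fix i assume "b = 1" "i < ?k" "a = i + 2"
      then show ?thesis using q0 qlt[of i] pv[of i] ixS[of i] unfolding ix_def by simp
    qed (use q0 in \<open>auto simp: ix_def\<close>)
  qed
qed


lemma seg_nth:
  assumes "c \<le> e" "e \<le> length \<pi>" "length r' = e - c" "j < length \<pi>"
  shows "(take c \<pi> @ r' @ drop e \<pi>) ! j =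
     (if j < c then \<pi>!j else if j < e then r'!(j-c) else \<pi>!j)"
  using assms by (auto simp: nth_append min_def)

lemma seg_len:
  assumes "c \<le> e" "e \<le> length \<pi>" "length r' = e - c"
  shows "length (take c \<pi> @ r' @ drop e \<pi>) = length \<pi>"
  using assms by auto

lemma seg_free:
  assumes ce: "c < e" "e \<le> length \<pi>" and fall: "\<forall>j. c \<le> j \<and> j < e \<longrightarrow> fr \<pi> j"
    and lr: "length r' = e - c" and sr: "set r' \<subseteq> set (take (e-c) (drop c \<pi>))"
  shows "fr (take c \<pi> @ r' @ drop e \<pi>) j = fr \<pi> j"
proof -
  define \<psi> where "\<psi> = take c \<pi> @ r' @ drop e \<pi>"
  have L: "length \<psi> = length \<pi>" unfolding \<psi>_def using ce lr by auto
  have N1: "\<psi>!j = \<pi>!j" if "j < c" for j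
    unfolding \<psi>_def using seg_nth[of c e \<pi> r' j] ce lr that by auto
  have N3: "\<psi>!j = \<pi>!j" if "e \<le> j" "j < length \<pi>" for j
    unfolding \<psi>_def using seg_nth[of c e \<pi> r' j] ce lr that by auto
  have N2: "\<exists>j'. c \<le> j' \<and> j' < e \<and> \<psi>!j = \<pi>!j'" if "c \<le> j" "j < e" for j
  proof -
    have "\<psi>!j = r'!(j-c)" unfolding \<psi>_def using seg_nth[of c e \<pi> r' j] ce lr that by auto
    moreover have "r'!(j-c) \<in> set (take (e-c) (drop c \<pi>))" using sr lr that by auto
    ultimately obtain i where "i < e - c" "\<psi>!j = take (e-c) (drop c \<pi>) ! i"
      by (metis in_set_conv_nth length_take length_drop min_less_iff_conj)
    then show ?thesis using ce by (intro exI[of _ "c+i"]) auto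
  qed
  have T1: "istop \<psi> q = istop \<pi> q" if "q < c" for q
    unfolding istop_def using N1[of q] N1[of "q-1"] that L by auto
  have T3: "istop \<psi> q = istop \<pi> q" if "e < q" for q
    unfolding istop_def using N3[of q] N3[of "q-1"] that L by auto
  define M where "M = (\<lambda>q. \<pi>!q) ` {q. q < c \<and> istop \<pi> q}"
  have Mne: "M \<noteq> {}" using fall ce unfolding fr_def M_def by fastforce
  have Mfin: "finite M" unfolding M_def by auto
  define m where "m = Min M"
  have "m \<in> M" unfolding m_def using Mne Mfin by (rule Min_in[rotated])
  then obtain q0 where q0: "q0 < c" "istop \<pi> q0" "\<pi>!q0 = m" unfolding M_def by auto
  have mle: "m \<le> \<pi>!q" if "q < c" "istop \<pi> q" for q
    unfolding m_def M_def using that by (intro Min_le) auto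
  have C1: "m < \<pi>!j" if "c \<le> j" "j < e" for j
    using that
  proof (induction j rule: less_induct)
    case (less j)
    then obtain q where q: "q < j" "istop \<pi> q" "\<pi>!q < \<pi>!j" using fall unfolding fr_def by auto
    show ?case
    proof (cases "q < c")
      case True then show ?thesis using mle[of q] q by auto
    next
      case False then show ?thesis using less.IH[of q] q less.prems by auto
    qed
  qed
  have C2: "m < \<psi>!j" if "c \<le> j" "j < e" for j
    using N2[OF that] C1 by auto
  have q0' : "istop \<psi> q0" "\<psi>!q0 = m" using T1 q0 N1 by auto
  have "fr \<psi> j = fr \<pi> j"
  proof (cases "j < c")
    case True
    then show ?thesis unfolding fr_def using L N1 T1 by auto
  next
    case False
    show ?thesis
    proof (cases "j < e")
      case True
      then have "fr \<psi> j" unfolding fr_def using q0' C2[of j] False q0 ce L True by (intro conjI exI[of _ q0]) auto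
      then show ?thesis using fall True False by auto
    next
      case False2: False
      show ?thesis
      proof
        assume "fr \<psi> j"
        then obtain q where q: "j < length \<psi>" "q < j" "istop \<psi> q" "\<psi>!q < \<psi>!j" unfolding fr_def by auto
        have pj: "\<psi>!j = \<pi>!j" using N3 False2 q L by auto
        have viaq0: "fr \<pi> j" if "m < \<pi>!j"
          unfolding fr_def using q0 that ce False2 q L by (intro conjI exI[of _ q0]) auto
        consider "q < c" | "c \<le> q \<and> q < e" | "q = e" | "e < q" by linarith
        then show "fr \<pi> j"
        proof cases
          case 1 then show ?thesis unfolding fr_def using q T1 N1 pj L by auto
        next
          case 2 then show ?thesis using C2[of q] q pj viaq0 by auto
        next
          case 3
          then have "\<psi>!(e-1) < \<psi>!e" using q unfolding istop_def by auto
          moreover have "m < \<psi>!(e-1)" using C2[of "e-1"] ce by auto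
          ultimately show ?thesis using 3 q pj viaq0 by auto
        next
          case 4 then show ?thesis unfolding fr_def using q T3 N3 pj L by auto
        qed
      next
        assume "fr \<pi> j"
        then obtain q where q: "j < length \<pi>" "q < j" "istop \<pi> q" "\<pi>!q < \<pi>!j" unfolding fr_def by auto
        have pj: "\<psi>!j = \<pi>!j" using N3 False2 q L by auto
        have viaq0: "fr \<psi> j" if "m < \<pi>!j"
          unfolding fr_def using q0' q0 that ce False2 q L pj by (intro conjI exI[of _ q0]) auto
        consider "q < c" | "c \<le> q \<and> q < e" | "q = e" | "e < q" by linarith
        then show "fr \<psi> j"
        proof cases
          case 1 then show ?thesis unfolding fr_def using q T1 N1 pj L by auto
        next
          case 2 then show ?thesis using C1[of q] q pj viaq0 by auto
        next
          case 3
          then have "\<pi>!(e-1) < \<pi>!e" using q unfolding istop_def by auto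
          moreover have "m < \<pi>!(e-1)" using C1[of "e-1"] ce by auto
          ultimately show ?thesis using 3 q pj viaq0 by auto
        next
          case 4 then show ?thesis unfolding fr_def using q T3 N3 pj L by auto
        qed
      qed
    qed
  qed
  then show ?thesis unfolding \<psi>_def .
qed


definition AvS :: "nat list \<Rightarrow> nat set \<Rightarrow> nat list set" where
  "AvS \<rho> S = {r. distinct r \<and> set r = S \<and> (\<forall>p. \<not> occ r p \<rho>)}"

definition rk :: "nat set \<Rightarrow> nat \<Rightarrow> nat" where
  "rk S x = card {y\<in>S. y \<le> x}"

lemma finite_perms: "finite (perms n)"
proof -
  have "perms n \<subseteq> {xs. set xs \<subseteq> {1..n} \<and> length xs = n}"
    unfolding perms_def using distinct_card by fastforce
  then show ?thesis using finite_lists_length_eq[of "{1..n}" n] finite_subset by blast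
qed

lemma perms_length: "\<pi> \<in> perms n \<Longrightarrow> length \<pi> = n"
  unfolding perms_def using distinct_card by fastforce

lemma rk_mono:
  assumes "finite S" "x \<in> S" "y \<in> S" "x < y"
  shows "rk S x < rk S y"
proof -
  have "{z\<in>S. z \<le> x} \<subseteq> {z\<in>S. z \<le> y}" using assms by auto
  moreover have "y \<in> {z\<in>S. z \<le> y}" "y \<notin> {z\<in>S. z \<le> x}" using assms by auto
  ultimately have "{z\<in>S. z \<le> x} \<subset> {z\<in>S. z \<le> y}" by blast
  then show ?thesis unfolding rk_def using assms by (intro psubset_card_mono) auto
qed

lemma rk_iff:
  assumes "finite S" "x \<in> S" "y \<in> S"
  shows "(rk S x < rk S y) = (x < y)"
  using rk_mono[OF assms(1,2,3)] rk_mono[OF assms(1,3,2)] by (cases x y rule: linorder_cases) auto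

lemma rk_inj: "finite S \<Longrightarrow> inj_on (rk S) S"
  unfolding inj_on_def using rk_iff by (metis less_irrefl linorder_neqE_nat)

lemma rk_range:
  assumes "finite S" "x \<in> S"
  shows "rk S x \<in> {1..card S}"
proof -
  have "x \<in> {y\<in>S. y \<le> x}" using assms by auto
  then have "1 \<le> rk S x" unfolding rk_def using assms by (metis (no_types, lifting) One_nat_def Suc_leI card_gt_0_iff empty_iff finite_subset mem_Collect_eq subsetI)
  moreover have "rk S x \<le> card S" unfolding rk_def using assms by (intro card_mono) auto
  ultimately show ?thesis by auto
qed

lemma rk_image: "finite S \<Longrightarrow> rk S ` S = {1..card S}"
proof -
  assume f: "finite S"
  have "rk S ` S \<subseteq> {1..card S}" using rk_range f by auto
  moreover have "card (rk S ` S) = card {1..card S}" using card_image[OF rk_inj[OF f]] by simp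
  ultimately show ?thesis by (intro card_subset_eq) auto
qed

lemma occ_map:
  assumes "\<forall>x\<in>set r. \<forall>y\<in>set r. (g x < g y) = (x < y)"
  shows "occ (map g r) p \<rho> = occ r p \<rho>"
proof -
  have "(map g r!(p+a) < map g r!(p+b)) = (r!(p+a) < r!(p+b))"
    if "p + a < length r" "p + b < length r" for a b
    using that assms by (auto simp: nth_mem)
  then have "\<forall>a<length \<rho>. \<forall>b<length \<rho>. (map g r!(p+a) < map g r!(p+b)) = (r!(p+a) < r!(p+b))"
    if "p + length \<rho> \<le> length r" using that by auto
  then show ?thesis unfolding occ_def length_map by auto
qed

lemma card_AvS:
  assumes "finite S"
  shows "card (AvS \<rho> S) = card {\<pi>\<in>perms (card S). \<forall>p. \<not> occ \<pi> p \<rho>}"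
    and "finite (AvS \<rho> S)"
proof -
  have bij: "bij_betw (map (rk S)) (AvS \<rho> S) {\<pi>\<in>perms (card S). \<forall>p. \<not> occ \<pi> p \<rho>}"
  proof (rule bij_betw_imageI)
    show "inj_on (map (rk S)) (AvS \<rho> S)"
      unfolding inj_on_def AvS_def using rk_inj[OF assms]
      by (auto intro: map_inj_on)
  next
    show "map (rk S) ` AvS \<rho> S = {\<pi> \<in> perms (card S). \<forall>p. \<not> occ \<pi> p \<rho>}"
    proof (intro equalityI subsetI)
      fix \<pi> assume "\<pi> \<in> map (rk S) ` AvS \<rho> S"
      then obtain r where r: "r \<in> AvS \<rho> S" "\<pi> = map (rk S) r" by auto
      have ord: "\<forall>x\<in>set r. \<forall>y\<in>set r. (rk S x < rk S y) = (x < y)"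
        using r rk_iff[OF assms] unfolding AvS_def by auto
      have "distinct \<pi>" using r rk_inj[OF assms] unfolding AvS_def by (auto simp: distinct_map)
      moreover have "set \<pi> = {1..card S}" using r rk_image[OF assms] unfolding AvS_def by auto
      moreover have "\<forall>p. \<not> occ \<pi> p \<rho>" using r occ_map[OF ord] unfolding AvS_def by auto
      ultimately show "\<pi> \<in> {\<pi> \<in> perms (card S). \<forall>p. \<not> occ \<pi> p \<rho>}" unfolding perms_def by auto
    next
      fix \<pi> assume p: "\<pi> \<in> {\<pi> \<in> perms (card S). \<forall>p. \<not> occ \<pi> p \<rho>}"
      define r where "r = map (inv_into S (rk S)) \<pi>"
      have sp: "set \<pi> = rk S ` S" using p rk_image[OF assms] unfolding perms_def by auto
      have mr: "map (rk S) r = \<pi>" unfolding r_def using sp by (auto intro!: map_idI simp: f_inv_into_f)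
      have sr: "set r = S" unfolding r_def using sp rk_inj[OF assms]
        by (simp add: image_image inv_into_f_f)
      have dr: "distinct r" using mr p unfolding perms_def by (metis (no_types, lifting) distinct_map mem_Collect_eq)
      have ord: "\<forall>x\<in>set r. \<forall>y\<in>set r. (rk S x < rk S y) = (x < y)"
        using sr rk_iff[OF assms] by auto
      have "\<forall>p. \<not> occ r p \<rho>" using p occ_map[OF ord] mr by auto
      then have "r \<in> AvS \<rho> S" using dr sr unfolding AvS_def by auto
      then show "\<pi> \<in> map (rk S) ` AvS \<rho> S" using mr by force
    qed
  qed
  then show "card (AvS \<rho> S) = card {\<pi>\<in>perms (card S). \<forall>p. \<not> occ \<pi> p \<rho>}"
    by (rule bij_betw_same_card)
  show "finite (AvS \<rho> S)" using bij_betw_finite[OF bij] finite_perms by auto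
qed

lemma alpha_occ:
  assumes "length \<rho> \<ge> 1"
  shows "alpha s (consec \<rho>) = card {\<pi>\<in>perms s. \<forall>p. \<not> occ \<pi> p \<rho>}"
  unfolding alpha_def avoids_def using contains_consec[OF assms] by auto


definition old :: "nat \<Rightarrow> nat list \<Rightarrow> nat \<Rightarrow> bool" where
  "old c \<pi> p \<longleftrightarrow> (\<exists>a. a < c \<and> a \<le> p \<and> (\<forall>j. a \<le> j \<and> j \<le> p \<longrightarrow> fr \<pi> j))"

definition rs :: "nat list \<Rightarrow> nat \<Rightarrow> bool" where
  "rs \<pi> c \<longleftrightarrow> fr \<pi> c \<and> \<not> fr \<pi> (c - 1)"

definition re :: "nat list \<Rightarrow> nat \<Rightarrow> nat" where
  "re \<pi> c = (LEAST e. c < e \<and> \<not> fr \<pi> e)"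

lemma fr_len: "fr \<pi> j \<Longrightarrow> j < length \<pi>" unfolding fr_def by auto

lemma fr_pos: "fr \<pi> j \<Longrightarrow> 0 < j" unfolding fr_def by auto

lemma re_props:
  assumes "fr \<pi> c"
  shows "c < re \<pi> c" "\<not> fr \<pi> (re \<pi> c)" "re \<pi> c \<le> length \<pi>"
    "\<And>j. c \<le> j \<Longrightarrow> j < re \<pi> c \<Longrightarrow> fr \<pi> j"
proof -
  have ex: "c < length \<pi> \<and> \<not> fr \<pi> (length \<pi>)" using assms fr_len by auto
  show "c < re \<pi> c" "\<not> fr \<pi> (re \<pi> c)" unfolding re_def using LeastI[of "\<lambda>e. c < e \<and> \<not> fr \<pi> e", OF ex] by auto
  show "re \<pi> c \<le> length \<pi>" unfolding re_def using ex by (intro Least_le) auto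
  fix j assume "c \<le> j" "j < re \<pi> c"
  then show "fr \<pi> j" using not_less_Least[of j "\<lambda>e. c < e \<and> \<not> fr \<pi> e"] assms unfolding re_def
    by (cases "c = j") auto
qed

lemma old_cong: "fr \<psi> = fr \<pi> \<Longrightarrow> old c \<psi> p = old c \<pi> p"
  unfolding old_def by simp

lemma occ_cong:
  assumes "length \<psi> = length \<pi>" "\<And>i. p \<le> i \<Longrightarrow> i < p + length \<rho> \<Longrightarrow> \<psi>!i = \<pi>!i"
  shows "occ \<psi> p \<rho> = occ \<pi> p \<rho>"
  unfolding occ_def using assms by auto

context
  fixes \<sigma> \<tau> :: "nat list" and n :: nat
  assumes sl: "length \<sigma> \<ge> 1" "length \<tau> \<ge> 1"
    and sv: "\<forall>x\<in>set \<sigma>. 1 \<le> x" "\<forall>x\<in>set \<tau>. 1 \<le> x"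
    and aeq: "\<And>s. alpha s (consec \<sigma>) = alpha s (consec \<tau>)"
begin

definition FF :: "nat set \<Rightarrow> nat list \<Rightarrow> nat list" where
  "FF S = (SOME f. bij_betw f (AvS \<sigma> S) (AvS \<tau> S))"

lemma FF_bij: "finite S \<Longrightarrow> bij_betw (FF S) (AvS \<sigma> S) (AvS \<tau> S)"
proof -
  assume f: "finite S"
  have "card (AvS \<sigma> S) = card (AvS \<tau> S)"
    using card_AvS(1)[OF f, of \<sigma>] card_AvS(1)[OF f, of \<tau>] aeq[of "card S"]
      alpha_occ[OF sl(1)] alpha_occ[OF sl(2)] by simp
  then have "\<exists>f. bij_betw f (AvS \<sigma> S) (AvS \<tau> S)"
    using card_AvS(2)[OF f] by (intro finite_same_card_bij) auto
  then show ?thesis unfolding FF_def by (rule someI_ex)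
qed

definition HH :: "nat \<Rightarrow> nat list set" where
  "HH c = {\<pi> \<in> perms n. \<forall>p. (old c \<pi> p \<longrightarrow> \<not> bad \<pi> p \<tau>) \<and> (\<not> old c \<pi> p \<longrightarrow> \<not> bad \<pi> p \<sigma>)}"

definition stp :: "nat \<Rightarrow> nat list \<Rightarrow> nat list" where
  "stp c \<pi> = (if rs \<pi> c then
      (let e = re \<pi> c; sg = take (e-c) (drop c \<pi>) in take c \<pi> @ FF (set sg) sg @ drop e \<pi>)
    else \<pi>)"

lemma stp_main:
  assumes H: "\<pi> \<in> HH c" and R: "rs \<pi> c"
  defines "e \<equiv> re \<pi> c"
  defines "sg \<equiv> take (e-c) (drop c \<pi>)"
  defines "sg' \<equiv> FF (set sg) sg"
  shows "stp c \<pi> = take c \<pi> @ sg' @ drop e \<pi>"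
    and "sg \<in> AvS \<sigma> (set sg)" and "sg' \<in> AvS \<tau> (set sg)" and "length sg' = e - c"
    and "fr (stp c \<pi>) = fr \<pi>"
    and "stp c \<pi> \<in> HH (c+1)"
proof -
  show st: "stp c \<pi> = take c \<pi> @ sg' @ drop e \<pi>"
    unfolding stp_def sg'_def sg_def e_def using R by (simp add: Let_def)
  have fc: "fr \<pi> c" and nfc: "\<not> fr \<pi> (c-1)" using R unfolding rs_def by auto
  have c0: "0 < c" using fr_pos[OF fc] .
  note rp = re_props[OF fc, folded e_def]
  have pin: "\<pi> \<in> perms n" using H unfolding HH_def by auto
  have ln: "length \<pi> = n" using perms_length[OF pin] .
  have dpi: "distinct \<pi>" using pin unfolding perms_def by auto
  have lsg: "length sg = e - c" unfolding sg_def using rp by auto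
  have sgn: "sg!i = \<pi>!(c+i)" if "i < e - c" for i unfolding sg_def using that rp by auto
  have dec: "\<pi> = take c \<pi> @ sg @ drop e \<pi>"
    unfolding sg_def using rp
    by (metis append_take_drop_id drop_drop le_add_diff_inverse2 less_imp_le_nat)
  have Hc: "\<And>p. (old c \<pi> p \<longrightarrow> \<not> bad \<pi> p \<tau>) \<and> (\<not> old c \<pi> p \<longrightarrow> \<not> bad \<pi> p \<sigma>)"
    using H unfolding HH_def by auto
  show A1: "sg \<in> AvS \<sigma> (set sg)"
    unfolding AvS_def
  proof (intro CollectI conjI allI refl)
    show "distinct sg" unfolding sg_def using dpi by auto
  next
    fix p show "\<not> occ sg p \<sigma>"
    proof
      assume o: "occ sg p \<sigma>"
      then have pl: "p + length \<sigma> \<le> e - c" using lsg unfolding occ_def by auto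
      have "occ \<pi> (c+p) \<sigma>" using o pl rp unfolding occ_def
        by (auto simp: sgn add.assoc[symmetric])
      moreover have "fr \<pi> j" if "c + p \<le> j" "j < c + p + length \<sigma>" for j
        using rp(4)[of j] that pl by auto
      ultimately have b: "bad \<pi> (c+p) \<sigma>" unfolding bad_def by auto
      have "\<not> old c \<pi> (c+p)"
        unfolding old_def using nfc c0 by (metis add_leE le_diff_conv2 Suc_leI One_nat_def le_add1 diff_le_self le_trans less_imp_le_nat nat_le_linear not_less_eq_eq Suc_pred)
      then show False using Hc[of "c+p"] b by auto
    qed
  qed
  have fS: "finite (set sg)" by auto
  show A2: "sg' \<in> AvS \<tau> (set sg)" unfolding sg'_def using FF_bij[OF fS] A1 by (auto simp: bij_betw_def)
  have dsg': "distinct sg'" and ssg': "set sg' = set sg" and nocc: "\<And>p. \<not> occ sg' p \<tau>"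
    using A2 unfolding AvS_def by auto
  show lsg': "length sg' = e - c"
    using distinct_card[OF dsg'] ssg' distinct_card[of sg] A1 lsg unfolding AvS_def by auto
  show FR: "fr (stp c \<pi>) = fr \<pi>"
    unfolding st using seg_free[of c e \<pi> sg'] rp lsg' ssg' sg_def by auto
  define \<psi> where "\<psi> = stp c \<pi>"
  have L: "length \<psi> = length \<pi>" unfolding \<psi>_def st using rp lsg' by auto
  have nth: "\<psi>!j = (if j < c then \<pi>!j else if j < e then sg'!(j-c) else \<pi>!j)" if "j < length \<pi>" for j
    unfolding \<psi>_def st using seg_nth[of c e \<pi> sg' j] rp lsg' that by auto
  have pin': "\<psi> \<in> perms n"
  proof -
    have "distinct \<psi>" unfolding \<psi>_def st using dpi dsg' ssg'
      by (subst (asm) dec) auto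
    moreover have "set \<psi> = set \<pi>" unfolding \<psi>_def st using ssg' by (subst (2) dec) auto
    ultimately show ?thesis using pin unfolding perms_def by auto
  qed
  have FR': "fr \<psi> = fr \<pi>" unfolding \<psi>_def using FR .
  have blk: "p + length \<rho> \<le> c \<or> e \<le> p \<or> (c \<le> p \<and> p + length \<rho> \<le> e)"
    if f: "\<And>j. p \<le> j \<Longrightarrow> j < p + length \<rho> \<Longrightarrow> fr \<pi> j" and "length \<rho> \<ge> 1" for p and \<rho> :: "nat list"
  proof (cases "p < c")
    case True
    then show ?thesis using f[of "c-1"] nfc by (cases "p + length \<rho> \<le> c") auto
  next
    case False
    then show ?thesis using f[of e] rp(2) by (cases "p < e") auto
  qed
  have badeq: "bad \<psi> p \<rho> = bad \<pi> p \<rho>" if pr: "p < c \<or> e \<le> p" and lr: "length \<rho> \<ge> 1" for p and \<rho> :: "nat list"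
  proof (cases "\<forall>j. p \<le> j \<and> j < p + length \<rho> \<longrightarrow> fr \<pi> j")
    case True
    then have "p + length \<rho> \<le> c \<or> e \<le> p" using blk[of p \<rho>] pr lr by auto
    then have "\<psi>!i = \<pi>!i" if "p \<le> i" "i < p + length \<rho>" for i
      using nth[of i] True fr_len that by auto
    then have "occ \<psi> p \<rho> = occ \<pi> p \<rho>" using L by (intro occ_cong) auto
    then show ?thesis unfolding bad_def FR' by auto
  next
    case False
    then show ?thesis unfolding bad_def FR' by auto
  qed
  have oldeq: "old (c+1) \<psi> p = old c \<pi> p" if pr: "p < c \<or> e \<le> p" for p
  proof -
    have "old (c+1) \<psi> p = old (c+1) \<pi> p" using old_cong[OF FR'] .
    moreover have "old (c+1) \<pi> p = old c \<pi> p"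
    proof
      assume "old (c+1) \<pi> p"
      then obtain a where a: "a < c + 1" "a \<le> p" "\<forall>j. a \<le> j \<and> j \<le> p \<longrightarrow> fr \<pi> j"
        unfolding old_def by auto
      show "old c \<pi> p"
      proof (cases "a < c")
        case True then show ?thesis using a unfolding old_def by auto
      next
        case False
        then have "a = c" using a by auto
        then show ?thesis using a pr rp(1,2) by (metis less_imp_le_nat not_less)
      qed
    next
      assume "old c \<pi> p"
      then obtain a where "a < c" "a \<le> p" "\<forall>j. a \<le> j \<and> j \<le> p \<longrightarrow> fr \<pi> j"
        unfolding old_def by auto
      then show "old (c+1) \<pi> p" unfolding old_def by (intro exI[of _ a]) auto
    qed
    ultimately show ?thesis by simp
  qed
  have "(old (c+1) \<psi> p \<longrightarrow> \<not> bad \<psi> p \<tau>) \<and> (\<not> old (c+1) \<psi> p \<longrightarrow> \<not> bad \<psi> p \<sigma>)" for p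
  proof (cases "c \<le> p \<and> p < e")
    case True
    have o: "old (c+1) \<psi> p" unfolding old_cong[OF FR'] old_def
      using True rp(4) FR' by (intro exI[of _ c]) auto
    have "\<not> bad \<psi> p \<tau>"
    proof
      assume b: "bad \<psi> p \<tau>"
      then have f: "\<And>j. p \<le> j \<Longrightarrow> j < p + length \<tau> \<Longrightarrow> fr \<pi> j" unfolding bad_def FR' by auto
      then have pe: "p + length \<tau> \<le> e" using blk[of p \<tau>] True sl(2) by auto
      have "\<psi>!(p+a) = sg'!(p-c+a)" if "a < length \<tau>" for a
        using nth[of "p+a"] pe that True rp by auto
      then have "occ sg' (p-c) \<tau>" using b pe lsg' True unfolding bad_def occ_def by auto
      then show False using nocc by auto
    qed
    then show ?thesis using o by auto
  next
    case False
    then have pr: "p < c \<or> e \<le> p" by auto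
    show ?thesis using Hc[of p] oldeq[OF pr] badeq[OF pr sl(1)] badeq[OF pr sl(2)] by auto
  qed
  then show "stp c \<pi> \<in> HH (c+1)" using pin' unfolding HH_def \<psi>_def by auto
qed

lemma stp_fr: "\<pi> \<in> HH c \<Longrightarrow> fr (stp c \<pi>) = fr \<pi>"
  using stp_main(5)[of \<pi> c] unfolding stp_def by (cases "rs \<pi> c") auto

lemma stp_in: assumes "\<pi> \<in> HH c" shows "stp c \<pi> \<in> HH (c+1)"
proof (cases "rs \<pi> c")
  case True then show ?thesis using stp_main(6)[OF assms] by auto
next
  case False
  have "old (c+1) \<pi> p = old c \<pi> p" for p
  proof
    assume "old (c+1) \<pi> p"
    then obtain a where a: "a < c + 1" "a \<le> p" "\<forall>j. a \<le> j \<and> j \<le> p \<longrightarrow> fr \<pi> j"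
      unfolding old_def by auto
    show "old c \<pi> p"
    proof (cases "a < c")
      case True then show ?thesis using a unfolding old_def by auto
    next
      case F: False
      then have ac: "a = c" using a by auto
      then have "fr \<pi> c" using a by auto
      then have "fr \<pi> (c-1)" "0 < c" using False fr_pos unfolding rs_def by auto
      have "\<forall>j. c-1 \<le> j \<and> j \<le> p \<longrightarrow> fr \<pi> j"
      proof (intro allI impI)
        fix j assume j: "c-1 \<le> j \<and> j \<le> p"
        show "fr \<pi> j"
        proof (cases "j = c-1")
          case True then show ?thesis using \<open>fr \<pi> (c-1)\<close> by simp
        next
          case False then show ?thesis using a ac j by auto
        qed
      qed
      then show ?thesis unfolding old_def using a ac \<open>0 < c\<close>
        by (intro exI[of _ "c-1"]) auto
    qed
  next
    assume "old c \<pi> p"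
    then obtain a where "a < c" "a \<le> p" "\<forall>j. a \<le> j \<and> j \<le> p \<longrightarrow> fr \<pi> j"
      unfolding old_def by auto
    then show "old (c+1) \<pi> p" unfolding old_def by (intro exI[of _ a]) auto
  qed
  then show ?thesis using assms False unfolding HH_def stp_def by auto
qed

lemma stp_inj: "inj_on (stp c) (HH c)"
proof (rule inj_onI)
  fix \<pi>1 \<pi>2 assume h1: "\<pi>1 \<in> HH c" and h2: "\<pi>2 \<in> HH c" and eq: "stp c \<pi>1 = stp c \<pi>2"
  have ff: "fr \<pi>1 = fr \<pi>2" using stp_fr[OF h1] stp_fr[OF h2] eq by metis
  have rr: "rs \<pi>1 c = rs \<pi>2 c" unfolding rs_def ff ..
  have ee: "re \<pi>1 c = re \<pi>2 c" unfolding re_def ff ..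
  show "\<pi>1 = \<pi>2"
  proof (cases "rs \<pi>1 c")
    case False then show ?thesis using eq rr unfolding stp_def by auto
  next
    case True
    define e where "e = re \<pi>1 c"
    have e2: "e = re \<pi>2 c" using ee e_def by simp
    have fc: "fr \<pi>1 c" using True unfolding rs_def by auto
    note rp = re_props[OF fc, folded e_def]
    have ln: "length \<pi>1 = n" "length \<pi>2 = n" using h1 h2 perms_length unfolding HH_def by auto
    define sg1 where "sg1 = take (e-c) (drop c \<pi>1)"
    define sg2 where "sg2 = take (e-c) (drop c \<pi>2)"
    note m1 = stp_main[OF h1 True, folded e_def sg1_def]
    note m2 = stp_main[OF h2 True[unfolded rr], folded e2 sg2_def]
    have l1: "length (take c \<pi>1) = c" and l2: "length (take c \<pi>2) = c" using rp ln by auto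
    have tk: "take c \<pi>1 = take c \<pi>2"
      using arg_cong[OF eq, of "take c"] m1(1) m2(1) l1 l2 by simp
    have dr: "drop e \<pi>1 = drop e \<pi>2"
      using arg_cong[OF eq, of "drop e"] m1(1) m2(1) l1 l2 m1(4) m2(4) rp by simp
    have mid: "FF (set sg1) sg1 = FF (set sg2) sg2"
      using arg_cong[OF eq, of "\<lambda>x. take (e-c) (drop c x)"] m1(1) m2(1) l1 l2 m1(4) m2(4) by (simp add: sg1_def sg2_def)
    have "set (FF (set sg1) sg1) = set sg1" "set (FF (set sg2) sg2) = set sg2"
      using m1(3) m2(3) unfolding AvS_def sg1_def sg2_def by auto
    then have ss: "set sg1 = set sg2" using mid by simp
    have "inj_on (FF (set sg1)) (AvS \<sigma> (set sg1))" using FF_bij[of "set sg1"] bij_betw_imp_inj_on by auto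
    moreover have "sg1 \<in> AvS \<sigma> (set sg1)" "sg2 \<in> AvS \<sigma> (set sg1)"
      using m1(2) m2(2) ss unfolding sg1_def sg2_def by auto
    ultimately have "sg1 = sg2" using mid ss by (auto dest: inj_onD)
    moreover have "\<pi>1 = take c \<pi>1 @ sg1 @ drop e \<pi>1" "\<pi>2 = take c \<pi>2 @ sg2 @ drop e \<pi>2"
      unfolding sg1_def sg2_def using rp
      by (metis append_take_drop_id drop_drop le_add_diff_inverse2 less_imp_le_nat)+
    ultimately show ?thesis using tk dr by simp
  qed
qed

lemma HH_fin: "finite (HH c)"
  using finite_perms[of n] unfolding HH_def by auto

lemma HH_mono: "card (HH c) \<le> card (HH (c+1))"
  by (rule card_inj_on_le[OF stp_inj]) (use stp_in HH_fin in auto)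

lemma HH_chain: "card (HH 0) \<le> card (HH c)"
proof (induction c)
  case (Suc c) then show ?case using HH_mono[of c] by auto
qed auto

lemma HH0: "HH 0 = {\<pi>\<in>perms n. \<forall>p. \<not> bad \<pi> p \<sigma>}"
  unfolding HH_def old_def by auto

lemma bad_old: assumes "\<pi> \<in> perms n" "bad \<pi> p \<rho>" "length \<rho> \<ge> 1" shows "old n \<pi> p"
proof -
  have "p \<le> p \<and> p < p + length \<rho>" using assms(3) by auto
  then have "fr \<pi> p" using assms(2) unfolding bad_def by blast
  then have "p < n" using fr_len perms_length[OF assms(1)] by auto
  then show ?thesis unfolding old_def using \<open>fr \<pi> p\<close> by (intro exI[of _ p]) auto
qed

lemma HHn: "HH n = {\<pi>\<in>perms n. \<forall>p. \<not> bad \<pi> p \<tau>}"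
  unfolding HH_def using bad_old sl by blast

lemma alpha_le: "alpha n (twelve_dash \<sigma>) \<le> alpha n (twelve_dash \<tau>)"
proof -
  have "alpha n (twelve_dash \<sigma>) = card (HH 0)"
    unfolding HH0 alpha_def avoids_def using contains_twelve[OF sl(1) sv(1)] by simp
  moreover have "alpha n (twelve_dash \<tau>) = card (HH n)"
    unfolding HHn alpha_def avoids_def using contains_twelve[OF sl(2) sv(2)] by simp
  ultimately show ?thesis using HH_chain[of n] by simp
qed

end


theorem mainTheorem7:
  fixes \<sigma> \<tau> :: "nat list" and k l :: nat
  assumes "k \<ge> 1" and "l \<ge> 1"
    and "\<sigma> \<in> perms k" and "length \<sigma> = k"
    and "\<tau> \<in> perms l" and "length \<tau> = l"
    and "egf (consec \<sigma>) = egf (consec \<tau>)"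
  shows "egf (twelve_dash \<sigma>) = egf (twelve_dash \<tau>)"
proof -
  have sv: "\<forall>x\<in>set \<sigma>. 1 \<le> x" "\<forall>x\<in>set \<tau>. 1 \<le> x"
    using assms(3,5) unfolding perms_def by auto
  have sl: "length \<sigma> \<ge> 1" "length \<tau> \<ge> 1" using assms by auto
  have aeq: "alpha s (consec \<sigma>) = alpha s (consec \<tau>)" for s
  proof -
    have "fps_nth (egf (consec \<sigma>)) s = fps_nth (egf (consec \<tau>)) s" using assms(7) by simp
    then have "real (alpha s (consec \<sigma>)) / fact s = real (alpha s (consec \<tau>)) / fact s"
      unfolding egf_def by simp
    then show ?thesis by (simp add: divide_cancel_right)
  qed
  have "alpha n (twelve_dash \<sigma>) = alpha n (twelve_dash \<tau>)" for n
    using alpha_le[OF sl sv aeq] alpha_le[OF sl(2,1) sv(2,1) aeq[symmetric]]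
    by (meson le_antisym)
  then show ?thesis unfolding egf_def by simp
qed

end
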